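(* The integer sequence $(PPL_t(n))_{n\geq 0}$ is $4$-regular.
   Context: The Thue-Morse word $t=t[1]t[2]\cdots=abbabaabbaababba\cdots$ is the fixed point starting with $a$ of the morphism $a\mapsto abba,\ b\mapsto baab$. A palindrome is a word $p=p[1]\cdots p[n]$ with $p[i]=p[n-i+1]$ for all $i$. $PPL_t(n)$ is the minimal number of nonempty palindromes whose concatenation equals the prefix of $t$ of length $n$, with $PPL_t(0)=0$. An integer sequence $(a(n))_{n\geq0}$ is called $k$-regular if there exist finitely many integer sequences $(a_1(n)),\ldots,(a_s(n))$ such that for every integer $i\geq 0$ and every $0\leq b<k^i$ there exist $c_1,\ldots,c_s\in\mathbb Z$ with $a(k^i n+b)=\sum_{j=1}^s c_j a_j(n)$ for all $n\geq 0$. *)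

theory Defs
  imports Main
begin

text \<open>Letters: a = False, b = True. The Thue-Morse morphism a -> abba, b -> baab.\<close>
definition tm_morph :: "bool list \<Rightarrow> bool list" where
  "tm_morph w = concat (map (\<lambda>c. [c, \<not> c, \<not> c, c]) w)"

text \<open>The Thue-Morse word, 0-indexed: thue_morse i = t[i+1]. It is the fixed point of the
  morphism starting with a; its length-(4^k) prefix is tm_morph^k applied to [a], and
  tm_morph^(i+1) [a] has length 4^(i+1) > i.\<close>
definition thue_morse :: "nat \<Rightarrow> bool" where
  "thue_morse i = (tm_morph ^^ Suc i) [False] ! i"

definition tm_prefix :: "nat \<Rightarrow> bool list" where
  "tm_prefix n = map thue_morse [0..<n]"

definition palindrome :: "'a list \<Rightarrow> bool" where
  "palindrome p \<longleftrightarrow> rev p = p"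

definition pal_length :: "'a list \<Rightarrow> nat" where
  "pal_length w = (LEAST k. \<exists>ps. length ps = k \<and> concat ps = w \<and>
                       (\<forall>p\<in>set ps. p \<noteq> [] \<and> palindrome p))"

definition PPL_t :: "nat \<Rightarrow> int" where
  "PPL_t n = int (pal_length (tm_prefix n))"

definition k_regular :: "nat \<Rightarrow> (nat \<Rightarrow> int) \<Rightarrow> bool" where
  "k_regular k a \<longleftrightarrow> (\<exists>S :: (nat \<Rightarrow> int) set. finite S \<and>
      (\<forall>i b. b < k ^ i \<longrightarrow>
         (\<exists>c :: (nat \<Rightarrow> int) \<Rightarrow> int. \<forall>n. a (k ^ i * n + b) = (\<Sum>s\<in>S. c s * s n))))"

end

theory Submission
  imports Defs
begin

lemma tm_morph_Nil[simp]: "tm_morph [] = []" by (simp add: tm_morph_def)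
lemma tm_morph_Cons[simp]: "tm_morph (a#w) = [a, \<not>a, \<not>a, a] @ tm_morph w"
  by (simp add: tm_morph_def)
lemma tm_morph_append[simp]: "tm_morph (u @ v) = tm_morph u @ tm_morph v"
  by (simp add: tm_morph_def)
lemma tm_morph_length[simp]: "length (tm_morph w) = 4 * length w"
  by (induction w) auto

lemma tm_morph_nth:
  assumes "k < length w" "r < 4"
  shows "tm_morph w ! (4*k+r) = [w!k, \<not> w!k, \<not> w!k, w!k] ! r"
  using assms
proof (induction w arbitrary: k)
  case Nil then show ?case by simp
next
  case (Cons a w)
  show ?case
  proof (cases k)
    case 0
    have "r = 0 \<or> r = 1 \<or> r = 2 \<or> r = 3" using Cons.prems by auto
    then show ?thesis using 0 by auto
  next
    case (Suc k')
    have "tm_morph (a#w) ! (4*k+r) = tm_morph w ! (4*k'+r)"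
      using Suc by (simp add: nth_append)
    then show ?thesis using Cons Suc by simp
  qed
qed

definition W :: "nat \<Rightarrow> bool list" where "W n = (tm_morph ^^ n) [False]"

lemma W_Suc: "W (Suc n) = tm_morph (W n)" by (simp add: W_def)
lemma W_len: "length (W n) = 4 ^ n" by (induction n) (auto simp: W_def)

lemma W_ext: "\<exists>v. W (Suc n) = W n @ v"
proof (induction n)
  case 0 show ?case by (simp add: W_def)
next
  case (Suc n)
  then obtain v where "W (Suc n) = W n @ v" by blast
  then have "W (Suc (Suc n)) = W (Suc n) @ tm_morph v" by (simp add: W_Suc)
  then show ?case by blast
qed

lemma W_mono: "n \<le> m \<Longrightarrow> i < 4 ^ n \<Longrightarrow> W m ! i = W n ! i"
proof (induction m)
  case 0 then show ?case by simp
next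
  case (Suc m)
  show ?case
  proof (cases "n = Suc m")
    case True then show ?thesis by simp
  next
    case False
    then have nm: "n \<le> m" using Suc.prems by simp
    obtain v where v: "W (Suc m) = W m @ v" using W_ext by blast
    have "4 ^ n \<le> (4::nat) ^ m" using nm by (simp add: power_increasing)
    then have "i < length (W m)" using Suc.prems(2) unfolding W_len by linarith
    then have "W (Suc m) ! i = W m ! i" using v by (simp add: nth_append)
    then show ?thesis using Suc.IH nm Suc.prems by simp
  qed
qed

lemma lt_pow4: "n < (4::nat) ^ n"
  by (induction n) auto

lemma tm_W: "i < 4 ^ m \<Longrightarrow> thue_morse i = W m ! i"
proof -
  assume a: "i < 4 ^ m"
  have b: "i < 4 ^ Suc i" using lt_pow4[of "Suc i"] by simp
  have "thue_morse i = W (Suc i) ! i" by (simp add: thue_morse_def W_def)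
  also have "\<dots> = W (max m (Suc i)) ! i" using W_mono[of "Suc i" "max m (Suc i)" i] b by simp
  also have "\<dots> = W m ! i" using W_mono[of m "max m (Suc i)" i] a by simp
  finally show ?thesis .
qed

lemma tm_blk: "r < 4 \<Longrightarrow> thue_morse (4*k+r) = [thue_morse k, \<not> thue_morse k, \<not> thue_morse k, thue_morse k] ! r"
proof -
  assume r: "r < 4"
  have k1: "k < 4 ^ Suc k" using lt_pow4[of "Suc k"] by simp
  have "4*k+r < 4 * 4 ^ Suc k" using k1 r by linarith
  then have "thue_morse (4*k+r) = W (Suc (Suc k)) ! (4*k+r)" by (intro tm_W) simp
  also have "\<dots> = tm_morph (W (Suc k)) ! (4*k+r)" by (simp add: W_Suc)
  also have "\<dots> = [W (Suc k) ! k, \<not> W (Suc k) ! k, \<not> W (Suc k) ! k, W (Suc k) ! k] ! r"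
    using r k1 by (intro tm_morph_nth) (simp_all add: W_len)
  also have "W (Suc k) ! k = thue_morse k" using tm_W[OF k1] by simp
  finally show ?thesis .
qed

lemma tm0: "thue_morse (4*k) = thue_morse k" using tm_blk[of 0 k] by simp
lemma tm1: "thue_morse (4*k+1) = (\<not> thue_morse k)" using tm_blk[of 1 k] by simp
lemma tm2: "thue_morse (4*k+2) = (\<not> thue_morse k)" using tm_blk[of 2 k] by simp
lemma tm3: "thue_morse (4*k+3) = thue_morse k" using tm_blk[of 3 k] by simp

lemma tm_pair: "thue_morse (2*k+1) = (\<not> thue_morse (2*k))"
proof (cases "even k")
  case True then obtain q where "k = 2*q" by blast
  then show ?thesis using tm0[of q] tm1[of q] by (simp add: mult.assoc)
next
  case False then obtain q where "k = 2*q+1" using oddE by blast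
  then have "2*k = 4*q+2" "2*k+1 = 4*q+3" by auto
  then show ?thesis by (simp only: tm2 tm3 not_not)
qed


definition PF :: "'a list \<Rightarrow> nat \<Rightarrow> bool" where
  "PF w k \<longleftrightarrow> (\<exists>ps. length ps = k \<and> concat ps = w \<and> (\<forall>p\<in>set ps. p \<noteq> [] \<and> palindrome p))"

lemma pal_length_PF: "pal_length w = (LEAST k. PF w k)"
  by (simp add: pal_length_def PF_def)

lemma PF_ex: "PF w (length w)"
  unfolding PF_def
  by (rule exI[of _ "map (\<lambda>x. [x]) w"]) (auto simp: palindrome_def)

lemma PF_pal_length: "PF w (pal_length w)"
  unfolding pal_length_PF by (rule LeastI_ex) (use PF_ex in blast)

lemma pal_length_le: "PF w k \<Longrightarrow> pal_length w \<le> k"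
  unfolding pal_length_PF by (rule Least_le)

lemma pal_length_Nil: "pal_length [] = 0"
  using pal_length_le[of "[]" 0] by (simp add: PF_def)

lemma pal_length_snoc:
  assumes "p \<noteq> []" "palindrome p"
  shows "pal_length (u @ p) \<le> pal_length u + 1"
proof -
  obtain ps where ps: "length ps = pal_length u" "concat ps = u" "\<forall>q\<in>set ps. q \<noteq> [] \<and> palindrome q"
    using PF_pal_length[of u] unfolding PF_def by blast
  have "PF (u @ p) (pal_length u + 1)" unfolding PF_def
    by (rule exI[of _ "ps @ [p]"]) (use ps assms in auto)
  then show ?thesis by (rule pal_length_le)
qed

lemma pal_length_last:
  assumes "w \<noteq> []"
  shows "\<exists>u p. w = u @ p \<and> p \<noteq> [] \<and> palindrome p \<and> pal_length w = pal_length u + 1"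
proof -
  obtain ps where ps: "length ps = pal_length w" "concat ps = w" "\<forall>q\<in>set ps. q \<noteq> [] \<and> palindrome q"
    using PF_pal_length[of w] unfolding PF_def by blast
  have "ps \<noteq> []" using ps assms by auto
  then obtain qs p where qs: "ps = qs @ [p]" by (metis rev_exhaust)
  have w: "w = concat qs @ p" using ps qs by simp
  have p: "p \<noteq> []" "palindrome p" using ps qs by auto
  have "PF (concat qs) (length qs)" unfolding PF_def using ps qs by auto
  then have "pal_length (concat qs) \<le> length qs" by (rule pal_length_le)
  moreover have "pal_length w \<le> pal_length (concat qs) + 1" using w p pal_length_snoc by metis
  moreover have "length qs + 1 = pal_length w" using ps qs by simp
  ultimately show ?thesis using w p by (intro exI[of _ "concat qs"] exI[of _ p]) auto
qed

definition pal :: "nat \<Rightarrow> nat \<Rightarrow> bool" where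
  "pal s e \<longleftrightarrow> (\<forall>i < e - s. thue_morse (s+i) = thue_morse (e-1-i))"

lemma tm_prefix_split: "s \<le> e \<Longrightarrow> tm_prefix e = tm_prefix s @ map thue_morse [s..<e]"
  unfolding tm_prefix_def by (metis map_append le_add_diff_inverse upt_add_eq_append zero_le)

lemma pal_palindrome: "s \<le> e \<Longrightarrow> palindrome (map thue_morse [s..<e]) \<longleftrightarrow> pal s e"
  unfolding palindrome_def pal_def
proof
  assume s: "s \<le> e" and r: "rev (map thue_morse [s..<e]) = map thue_morse [s..<e]"
  show "\<forall>i<e - s. thue_morse (s + i) = thue_morse (e - 1 - i)"
  proof (intro allI impI)
    fix i assume i: "i < e - s"
    have "rev (map thue_morse [s..<e]) ! i = map thue_morse [s..<e] ! i" using r by simp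
    then show "thue_morse (s + i) = thue_morse (e - 1 - i)" using i s
      by (simp add: rev_nth)
  qed
next
  assume s: "s \<le> e" and h: "\<forall>i<e - s. thue_morse (s + i) = thue_morse (e - 1 - i)"
  show "rev (map thue_morse [s..<e]) = map thue_morse [s..<e]"
  proof (rule nth_equalityI)
    show "length (rev (map thue_morse [s..<e])) = length (map thue_morse [s..<e])" by simp
  next
    fix i assume i: "i < length (rev (map thue_morse [s..<e]))"
    then have i': "i < e - s" by simp
    have "rev (map thue_morse [s..<e]) ! i = thue_morse (s + (e - s - 1 - i))"
      using i' by (simp add: rev_nth)
    also have "\<dots> = thue_morse (e - 1 - (e - s - 1 - i))" using h i' by simp
    also have "e - 1 - (e - s - 1 - i) = s + i" using i' by simp
    finally show "rev (map thue_morse [s..<e]) ! i = map thue_morse [s..<e] ! i" using i' by simp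
  qed
qed

abbreviation d :: "nat \<Rightarrow> int" where "d \<equiv> PPL_t"

lemma d0: "d 0 = 0" by (simp add: PPL_t_def tm_prefix_def pal_length_Nil)

lemma d_pal: "s < e \<Longrightarrow> pal s e \<Longrightarrow> d e \<le> d s + 1"
proof -
  assume a: "s < e" "pal s e"
  have "pal_length (tm_prefix e) \<le> pal_length (tm_prefix s) + 1"
    using pal_length_snoc[of "map thue_morse [s..<e]" "tm_prefix s"] a
    by (simp add: tm_prefix_split[of s e] pal_palindrome)
  then show ?thesis unfolding PPL_t_def by simp
qed

lemma d_last: "0 < e \<Longrightarrow> \<exists>s<e. pal s e \<and> d e = d s + 1"
proof -
  assume e: "0 < e"
  have "tm_prefix e \<noteq> []" using e by (simp add: tm_prefix_def)
  then obtain u p where up: "tm_prefix e = u @ p" "p \<noteq> []" "palindrome p"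
    "pal_length (tm_prefix e) = pal_length u + 1" using pal_length_last by blast
  define s where "s = length u"
  have le: "length (tm_prefix e) = e" by (simp add: tm_prefix_def)
  have se: "s < e" using up le s_def by (metis length_append length_greater_0_conv less_add_same_cancel1)
  have "tm_prefix e = tm_prefix s @ map thue_morse [s..<e]" using se by (simp add: tm_prefix_split)
  then have "u = tm_prefix s" "p = map thue_morse [s..<e]" using up(1) s_def
    by (metis append_eq_append_conv length_map length_upt tm_prefix_def diff_zero)+
  then show ?thesis using se up by (intro exI[of _ s]) (auto simp: PPL_t_def pal_palindrome)
qed


abbreviation t :: "nat \<Rightarrow> bool" where "t \<equiv> thue_morse"

lemma pal_iff2: "pal s e \<longleftrightarrow> (\<forall>i j. s \<le> i \<longrightarrow> i < e \<longrightarrow> i + j + 1 = s + e \<longrightarrow> t i = t j)"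
proof
  assume h: "pal s e"
  show "\<forall>i j. s \<le> i \<longrightarrow> i < e \<longrightarrow> i + j + 1 = s + e \<longrightarrow> t i = t j"
  proof (intro allI impI)
    fix i j assume ij: "s \<le> i" "i < e" "i + j + 1 = s + e"
    have "t (s + (i - s)) = t (e - 1 - (i - s))" using h ij unfolding pal_def
      by (metis diff_less_mono)
    moreover have "s + (i - s) = i" "e - 1 - (i - s) = j" using ij by auto
    ultimately show "t i = t j" by simp
  qed
next
  assume h: "\<forall>i j. s \<le> i \<longrightarrow> i < e \<longrightarrow> i + j + 1 = s + e \<longrightarrow> t i = t j"
  show "pal s e" unfolding pal_def
  proof (intro allI impI)
    fix i assume i: "i < e - s"
    show "t (s + i) = t (e - 1 - i)" using h[rule_format, of "s+i" "e - 1 - i"] i by simp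
  qed
qed

lemma tm1'[simp]: "t (Suc (4*k)) = (\<not> t k)" using tm1[of k] by simp
lemma tm2'[simp]: "t (Suc (Suc (4*k))) = (\<not> t k)" using tm2[of k] by simp
lemma tm3'[simp]: "t (Suc (Suc (Suc (4*k)))) = t k"
proof -
  have e: "Suc (Suc (Suc (4*k))) = 4*k+3" by simp
  show ?thesis by (subst e) (rule tm3)
qed
lemma tm3''[simp]: "t (4*k+3) = t k" by (rule tm3)
lemma tm0'[simp]: "t (4*k) = t k" by (rule tm0)

lemma four_cases: "(r::nat) < 4 \<Longrightarrow> r = 0 \<or> r = 1 \<or> r = 2 \<or> r = 3" by auto

lemma pal_single: "pal s (Suc s)" by (simp add: pal_def)

lemma pal_shrink: "pal s e \<Longrightarrow> pal (Suc s) (e - 1)"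
  unfolding pal_iff2 by auto

lemma pal_4: "pal s e \<Longrightarrow> pal (4*s) (4*e)"
  unfolding pal_iff2
proof (intro allI impI)
  fix i j assume h: "\<forall>i j. s \<le> i \<longrightarrow> i < e \<longrightarrow> i + j + 1 = s + e \<longrightarrow> t i = t j"
    and ij: "4*s \<le> i" "i < 4*e" "i + j + 1 = 4*s + 4*e"
  define q where "q = i div 4"
  define r where "r = i mod 4"
  have i: "i = 4*q + r" "r < 4" unfolding q_def r_def by auto
  have q: "s \<le> q" "q < e" using ij i by auto
  have j: "j = 4*(s+e-1-q) + (3-r)" using ij i q by auto
  have tq: "t q = t (s+e-1-q)" using h q by auto
  show "t i = t j" unfolding i j using four_cases[OF i(2)] tq
    by auto
qed

lemma pal_desub:
  assumes p: "pal s e" and c: "s + e = 4*(a+b)" and sa: "s \<le> 4*a+3" and ab: "a \<le> b"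
  shows "pal a b"
  unfolding pal_iff2
proof (intro allI impI)
  fix i j assume ij: "a \<le> i" "i < b" "i + j + 1 = a + b"
  have P: "\<And>x y. s \<le> x \<Longrightarrow> x < e \<Longrightarrow> x + y + 1 = s + e \<Longrightarrow> t x = t y"
    using p unfolding pal_iff2 by blast
  show "t i = t j"
  proof (cases "s \<le> 4*i")
    case True
    have "t (4*i) = t (4*j+3)" using ij c True sa by (intro P) auto
    then show ?thesis by (simp add: tm0 tm3)
  next
    case False
    then have ia: "i = a" using ij sa by auto
    show ?thesis
    proof (cases "j = i")
      case True then show ?thesis by simp
    next
      case False
      then have "b \<ge> a + 2" using ij ia by auto
      have "t (4*i+3) = t (4*j)" using ij c \<open>\<not> s \<le> 4*i\<close> sa ia \<open>b \<ge> a + 2\<close> by (intro P) auto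
      then show ?thesis by (simp add: tm0 tm3)
    qed
  qed
qed

lemma pal_center:
  assumes p: "pal s e" and L: "s + 4 \<le> e"
  shows "(s + e) mod 4 = 0"
proof -
  have P: "\<And>x y. s \<le> x \<Longrightarrow> x < e \<Longrightarrow> x + y + 1 = s + e \<Longrightarrow> t x = t y"
    using p unfolding pal_iff2 by blast
  show ?thesis
  proof (cases "even (e - s)")
    case True
    then obtain m where m: "e - s = 2*m" by blast
    define c where "c = s + m"
    have "t (c - 1) = t c" using L m c_def by (intro P) auto
    have "even c"
    proof (rule ccontr)
      assume "odd c"
      then obtain j where "c = 2*j+1" using oddE by blast
      then show False using \<open>t (c - 1) = t c\<close> tm_pair[of j] by simp
    qed
    then obtain j where "c = 2*j" by blast
    then have "s + e = 4*j" using m c_def L by auto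
    then show ?thesis by simp
  next
    case False
    then obtain m where m: "e - s = 2*m+1" using oddE by blast
    define c where "c = s + m"
    have m2: "m \<ge> 2" using m L by auto
    have A: "t (c - 1) = t (c + 1)" using L m c_def m2 by (intro P) auto
    have B: "t (c - 2) = t (c + 2)" using L m c_def m2 by (intro P) auto
    define k where "k = c div 4"
    define r where "r = c mod 4"
    have cr: "c = 4*k+r" "r < 4" unfolding k_def r_def by auto
    have c2: "c \<ge> 2" using m2 c_def by auto
    show ?thesis
    proof (cases "r = 0")
      case True
      then have "k \<ge> 1" using cr c2 by auto
      then have "c - 1 = 4*(k-1)+3" "c - 2 = 4*(k-1)+2" "c+1 = 4*k+1" "c+2 = 4*k+2" using cr True by auto
      then show ?thesis using A B by simp
    next
      case r1: False
      show ?thesis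
      proof (cases "r = 1")
        case True
        then have "c - 1 = 4*k" "c+1 = 4*k+2" using cr by auto
        then show ?thesis using A by simp
      next
        case r2: False
        show ?thesis
        proof (cases "r = 2")
          case True
          then have "c - 1 = 4*k+1" "c+1 = 4*k+3" using cr by auto
          then show ?thesis using A by simp
        next
          case False
          then have "r = 3" using r1 r2 cr by auto
          then have e: "c - 1 = 4*k+2" "c - 2 = 4*k+1" "c+1 = 4*(k+1)" "c+2 = 4*(k+1)+1" using cr by auto
          have "t (c - 1) = (\<not> t k)" "t (c - 2) = (\<not> t k)" "t (c+1) = t (k+1)" "t (c+2) = (\<not> t (k+1))"
            by (simp only: e tm0 tm1 tm2)+
          then show ?thesis using A B by simp
        qed
      qed
    qed
  qed
qed


function f :: "nat \<Rightarrow> int" where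
  "f n = (if n = 0 then 0
          else if n mod 4 = 0 then f (n div 4)
          else if n mod 4 = 1 then f (n div 4) + 1
          else if n mod 4 = 2 then min (f (n div 4)) (f (n div 4 + 1)) + 2
          else f (n div 4 + 1) + 1)"
  by auto
termination by (relation "measure id") auto

declare f.simps[simp del]

lemma f_0[simp]: "f 0 = 0" by (simp add: f.simps)
lemma f4_0[simp]: "f (4*n) = f n"
proof -
  have A: "(4*n) div 4 = n" "(4*n) mod 4 = 0" by simp_all
  show ?thesis by (subst f.simps) (simp only: A, simp)
qed
lemma f4_1[simp]: "f (4*n+1) = f n + 1"
proof -
  have A: "(4*n+1) div 4 = n" "(4*n+1) mod 4 = 1" "(4*n+1 = 0) = False" by presburger+
  show ?thesis by (subst f.simps) (simp only: A, simp)
qed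
lemma f4_2[simp]: "f (4*n+2) = min (f n) (f (n+1)) + 2"
proof -
  have A: "(4*n+2) div 4 = n" "(4*n+2) mod 4 = 2" "(4*n+2 = 0) = False" by presburger+
  show ?thesis by (subst f.simps) (simp only: A, simp)
qed
lemma f4_3[simp]: "f (4*n+3) = f (n+1) + 1"
proof -
  have A: "(4*n+3) div 4 = n" "(4*n+3) mod 4 = 3" "(4*n+3 = 0) = False" by presburger+
  show ?thesis by (subst f.simps) (simp only: A, simp)
qed
lemma f4_1'[simp]: "f (Suc (4*n)) = f n + 1" using f4_1[of n] by simp
lemma f4_2'[simp]: "f (Suc (Suc (4*n))) = min (f n) (f (n+1)) + 2" using f4_2[of n] by simp
lemma f4_3'[simp]: "f (Suc (Suc (Suc (4*n)))) = f (n+1) + 1"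
proof -
  have e: "Suc (Suc (Suc (4*n))) = 4*n+3" by simp
  show ?thesis by (subst e) (rule f4_3)
qed

lemma nat_4_cases:
  fixes n :: nat
  obtains q where "n = 4*q" | q where "n = 4*q+1" | q where "n = 4*q+2" | q where "n = 4*q+3"
proof -
  have e: "n = 4*(n div 4) + n mod 4" by simp
  consider "n mod 4 = 0" | "n mod 4 = 1" | "n mod 4 = 2" | "n mod 4 = 3" by linarith
  then show ?thesis
  proof cases
    case 1 then show ?thesis using that(1)[of "n div 4"] e by simp
  next
    case 2 then show ?thesis using that(2)[of "n div 4"] e by simp
  next
    case 3 then show ?thesis using that(3)[of "n div 4"] e by simp
  next
    case 4 then show ?thesis using that(4)[of "n div 4"] e by simp
  qed
qed

lemma f_lip: "\<bar>f (Suc n) - f n\<bar> \<le> 1"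
proof (induction n rule: less_induct)
  case (less n)
  show ?case
  proof (cases n rule: nat_4_cases)
    case (1 q) then show ?thesis by simp
  next
    case (2 q)
    then have "q < n" by simp
    then have "\<bar>f (Suc q) - f q\<bar> \<le> 1" using less by blast
    then show ?thesis using 2 by simp
  next
    case (3 q)
    then have "q < n" by simp
    then have "\<bar>f (Suc q) - f q\<bar> \<le> 1" using less by blast
    then show ?thesis using 3 by simp
  next
    case (4 q)
    have "Suc n = 4*(q+1)" using 4 by simp
    then have "f (Suc n) = f (q+1)" using f4_0 by metis
    then show ?thesis using 4 by simp
  qed
qed

lemma f_pal: "pal s e \<Longrightarrow> s < e \<Longrightarrow> f e \<le> f s + 1"
proof (induction "e - s" arbitrary: s e rule: less_induct)
  case less
  note IH = less.hyps and p = less.prems(1) and se = less.prems(2)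
  have P: "\<And>x y. s \<le> x \<Longrightarrow> x < e \<Longrightarrow> x + y + 1 = s + e \<Longrightarrow> t x = t y"
    using p unfolding pal_iff2 by blast
  consider "e = s + 1" | "e = s + 2" | "e = s + 3" | "s + 4 \<le> e" using se by linarith
  then show ?case
  proof cases
    case 1 then show ?thesis using f_lip[of s] by simp
  next
    case 2
    have "t s = t (s+1)" using 2 by (intro P) auto
    then show ?thesis
    proof (cases s rule: nat_4_cases)
      case (1 q) then show ?thesis using \<open>t s = t (s+1)\<close> by simp
    next
      case (2 q) then have "e = 4*q+3" using \<open>e = s+2\<close> by simp
      then show ?thesis using 2 f_lip[of q] by simp
    next
      case (3 q) then show ?thesis using \<open>t s = t (s+1)\<close> by simp
    next
      case (4 q) then have "e = 4*(q+1)+1" using \<open>e = s+2\<close> by simp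
      then have "f e = f (q+1) + 1" using f4_1 by metis
      then show ?thesis using 4 by simp
    qed
  next
    case 3
    have "t s = t (s+2)" using 3 by (intro P) auto
    then show ?thesis
    proof (cases s rule: nat_4_cases)
      case (1 q) then show ?thesis using \<open>t s = t (s+2)\<close> by simp
    next
      case (2 q) then show ?thesis using \<open>t s = t (s+2)\<close> by simp
    next
      case (3 q) then have "e = 4*(q+1)+1" using \<open>e = s+3\<close> by simp
      then have "f e = f (q+1) + 1" using f4_1 by metis
      then show ?thesis using 3 f_lip[of q] by simp
    next
      case (4 q) then have "e = 4*(q+1)+2" using \<open>e = s+3\<close> by simp
      then have "f e = min (f (q+1)) (f (q+1+1)) + 2" using f4_2 by metis
      then show ?thesis using 4 by simp
    qed
  next
    case 4
    have c: "(s + e) mod 4 = 0" using pal_center p 4 by blast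
    show ?thesis
    proof (cases s rule: nat_4_cases)
      case (1 a)
      have "e = 4*(e div 4)" using c 1 by presburger
      then obtain b where b: "e = 4*b" by blast
      have ab: "a < b" using 4 1 b by simp
      have pab: "pal a b" using 1 b ab by (intro pal_desub[OF p]) auto
      have "f b \<le> f a + 1" using IH[of b a] pab ab 1 b 4 by simp
      then show ?thesis using 1 b by simp
    next
      case (2 a)
      have "e = 4*(e div 4)+3" using c 2 by presburger
      then obtain b where b: "e = 4*b+3" by blast
      have ab: "a < b" using 4 2 b by simp
      have pab: "pal a (b+1)" using 2 b ab by (intro pal_desub[OF p]) auto
      have "f (b+1) \<le> f a + 1" using IH[of "b+1" a] pab ab 2 b 4 by simp
      then show ?thesis using 2 b by simp
    next
      case (3 a)
      have "e = 4*(e div 4)+2" using c 3 by presburger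
      then obtain b where b: "e = 4*b+2" by blast
      have ab: "a < b" using 4 3 b by simp
      have p1: "pal a (b+1)" using 3 b ab by (intro pal_desub[OF p]) auto
      have p2: "pal (a+1) b" using 3 b ab by (intro pal_desub[OF p]) auto
      have h1: "f (b+1) \<le> f a + 1" using IH[of "b+1" a] p1 ab 3 b 4 by simp
      have h2: "f b \<le> f (a+1) + 1"
      proof (cases "a + 1 = b")
        case True then show ?thesis by simp
      next
        case False then show ?thesis using IH[of b "a+1"] p2 ab 3 b 4 by simp
      qed
      show ?thesis using 3 b h1 h2 by simp
    next
      case (4 a)
      have "e = 4*(e div 4)+1" using c 4 by presburger
      then obtain b where b: "e = 4*b+1" by blast
      have ab: "a < b" using 4 \<open>s + 4 \<le> e\<close> b by simp
      have p2: "pal (a+1) b" using 4 b ab by (intro pal_desub[OF p]) auto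
      have h2: "f b \<le> f (a+1) + 1"
      proof (cases "a + 1 = b")
        case True then show ?thesis by simp
      next
        case False then show ?thesis using IH[of b "a+1"] p2 ab 4 b by simp
      qed
      show ?thesis using 4 b h2 by simp
    qed
  qed
qed


lemma d_ge: "f m \<le> d m"
proof (induction m rule: less_induct)
  case (less m)
  show ?case
  proof (cases "m = 0")
    case True then show ?thesis by (simp add: d0)
  next
    case False
    then obtain s where s: "s < m" "pal s m" "d m = d s + 1" using d_last by blast
    have "f m \<le> f s + 1" using f_pal s by blast
    then show ?thesis using less[OF s(1)] s by simp
  qed
qed

lemma d_le: "d m \<le> f m"
proof (induction m rule: less_induct)
  case (less m)
  note IH = less
  show ?case
  proof (cases m rule: nat_4_cases)
    case (1 n)
    show ?thesis
    proof (cases "n = 0")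
      case True then show ?thesis using 1 by (simp add: d0)
    next
      case False
      then obtain s where s: "s < n" "pal s n" "d n = d s + 1" using d_last by blast
      have "d (4*n) \<le> d (4*s) + 1" using s by (intro d_pal pal_4) auto
      moreover have "d (4*s) \<le> f s" using IH[of "4*s"] 1 s by simp
      moreover have "f s \<le> d s" by (rule d_ge)
      moreover have "d n \<le> f n" using IH[of n] 1 False by simp
      ultimately show ?thesis using 1 s by simp
    qed
  next
    case (2 n)
    have "d (4*n+1) \<le> d (4*n) + 1" using d_pal[of "4*n" "4*n+1"] pal_single by simp
    moreover have "d (4*n) \<le> f n" using IH[of "4*n"] 2 by simp
    ultimately show ?thesis using 2 by simp
  next
    case (3 n)
    have a1: "d (4*n+2) \<le> d (4*n+1) + 1" using d_pal[of "4*n+1" "4*n+2"] pal_single by simp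
    have a2: "d (4*n+1) \<le> d (4*n) + 1" using d_pal[of "4*n" "4*n+1"] pal_single by simp
    have a3: "d (4*n) \<le> f n" using IH[of "4*n"] 3 by simp
    obtain s where s: "s < n+1" "pal s (n+1)" "d (n+1) = d s + 1" using d_last[of "n+1"] by auto
    have b: "d (n+1) \<le> f (n+1)" using IH[of "n+1"] 3 by simp
    have "d (4*n+2) \<le> f s + 3"
    proof (cases "s = n")
      case True then show ?thesis using a1 a2 a3 by simp
    next
      case False
      have p: "pal (4*s+2) (4*n+2)"
        using pal_shrink[OF pal_shrink[OF pal_4[OF s(2)]]] by (simp add: algebra_simps)
      have "d (4*n+2) \<le> d (4*s+2) + 1" using p False s by (intro d_pal) auto
      moreover have "d (4*s+2) \<le> f (4*s+2)" using IH[of "4*s+2"] 3 s False by simp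
      ultimately show ?thesis by simp
    qed
    moreover have "f s \<le> d s" by (rule d_ge)
    ultimately show ?thesis using 3 s a1 a2 a3 b by simp
  next
    case (4 n)
    obtain s where s: "s < n+1" "pal s (n+1)" "d (n+1) = d s + 1" using d_last[of "n+1"] by auto
    have b: "d (n+1) \<le> f (n+1)" using IH[of "n+1"] 4 by simp
    have p: "pal (4*s+1) (4*n+3)"
      using pal_shrink[OF pal_4[OF s(2)]] by (simp add: algebra_simps)
    have "d (4*n+3) \<le> d (4*s+1) + 1" using p s by (intro d_pal) auto
    moreover have "d (4*s+1) \<le> f (4*s+1)" using IH[of "4*s+1"] 4 s by simp
    moreover have "f s \<le> d s" by (rule d_ge)
    ultimately show ?thesis using 4 s b by simp
  qed
qed

lemma d_eq_f: "PPL_t = f"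
  using d_le d_ge by (intro ext antisym) auto


definition g :: "nat \<Rightarrow> int" where "g n = f (Suc n) - f n"

lemma g_vals: "g n = -1 \<or> g n = 0 \<or> g n = 1"
  using f_lip[of n] unfolding g_def by auto

lemma rec_step: "r < 4 \<Longrightarrow> \<exists>\<rho> \<chi>. \<forall>n. f (4*n+r) = f n + \<rho> (g n) \<and> g (4*n+r) = \<chi> (g n)"
proof -
  assume "r < 4"
  then consider "r = 0" | "r = 1" | "r = 2" | "r = 3" by linarith
  then show ?thesis
  proof cases
    case 1
    show ?thesis by (rule exI[of _ "\<lambda>x. 0"], rule exI[of _ "\<lambda>x. 1"]) (simp add: 1 g_def)
  next
    case 2
    show ?thesis by (rule exI[of _ "\<lambda>x. 1"], rule exI[of _ "\<lambda>x. min 0 x + 1"]) (auto simp: 2 g_def)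
  next
    case 3
    show ?thesis by (rule exI[of _ "\<lambda>x. min 0 x + 2"], rule exI[of _ "\<lambda>x. max x 0 - 1"]) (auto simp: 3 g_def)
  next
    case 4
    have "\<And>n. f (Suc (4*n+3)) = f (n+1)"
    proof -
      fix n have "Suc (4*n+3) = 4*(n+1)" by simp
      then show "f (Suc (4*n+3)) = f (n+1)" using f4_0 by metis
    qed
    then show ?thesis by (intro exI[of _ "\<lambda>x. x + 1"] exI[of _ "\<lambda>x. -1"]) (auto simp: 4 g_def)
  qed
qed

lemma kernel: "b < 4^i \<Longrightarrow> \<exists>\<psi> \<chi>. \<forall>n. f (4^i*n+b) = f n + \<psi> (g n) \<and> g (4^i*n+b) = \<chi> (g n)"
proof (induction i arbitrary: b)
  case 0
  then show ?case by (intro exI[of _ "\<lambda>x. 0"] exI[of _ "\<lambda>x. x"]) simp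
next
  case (Suc i)
  define b' where "b' = b div 4"
  define r where "r = b mod 4"
  have b: "b = 4*b' + r" "r < 4" unfolding b'_def r_def by auto
  have b': "b' < 4^i" using Suc.prems b by auto
  obtain \<psi> \<chi> where IH: "\<forall>n. f (4^i*n+b') = f n + \<psi> (g n) \<and> g (4^i*n+b') = \<chi> (g n)"
    using Suc.IH[OF b'] by blast
  obtain \<rho> \<chi>' where R: "\<forall>n. f (4*n+r) = f n + \<rho> (g n) \<and> g (4*n+r) = \<chi>' (g n)"
    using rec_step[OF b(2)] by blast
  have e: "\<And>n. 4^Suc i*n+b = 4*(4^i*n+b') + r" using b by (simp add: algebra_simps)
  show ?case
  proof (rule exI[of _ "\<lambda>x. \<psi> x + \<rho> (\<chi> x)"], rule exI[of _ "\<lambda>x. \<chi>' (\<chi> x)"], intro allI)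
    fix n
    define m where "m = 4^i*n+b'"
    have A: "f (4^Suc i*n+b) = f (4*m + r)" "g (4^Suc i*n+b) = g (4*m + r)"
      unfolding m_def by (simp_all only: e)
    have B: "f (4*m + r) = f m + \<rho> (g m)" "g (4*m+r) = \<chi>' (g m)" using R by auto
    have C: "f m = f n + \<psi> (g n)" "g m = \<chi> (g n)" using IH unfolding m_def by auto
    show "f (4^Suc i*n+b) = f n + (\<psi> (g n) + \<rho> (\<chi> (g n))) \<and> g (4^Suc i*n+b) = \<chi>' (\<chi> (g n))"
      unfolding A B C by simp
  qed
qed

definition lin :: "(nat \<Rightarrow> int) set \<Rightarrow> (nat \<Rightarrow> int) \<Rightarrow> bool" where
  "lin S a \<longleftrightarrow> (\<exists>c :: (nat \<Rightarrow> int) \<Rightarrow> int. \<forall>n. a n = (\<Sum>s\<in>S. c s * s n))"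

lemma lin_mem: "finite S \<Longrightarrow> s0 \<in> S \<Longrightarrow> lin S s0"
  unfolding lin_def
proof (intro exI[of _ "\<lambda>s. if s = s0 then 1 else 0"] allI)
  fix n assume "finite S" "s0 \<in> S"
  have "(\<Sum>s\<in>S. (if s = s0 then 1 else 0) * s n) = (\<Sum>s\<in>S. if s = s0 then s0 n else 0)"
    by (rule sum.cong) auto
  also have "\<dots> = s0 n" using \<open>finite S\<close> \<open>s0 \<in> S\<close> by simp
  finally show "s0 n = (\<Sum>s\<in>S. (if s = s0 then 1 else 0) * s n)" by simp
qed

lemma lin_add: "lin S a \<Longrightarrow> lin S b \<Longrightarrow> lin S (\<lambda>n. a n + b n)"
  unfolding lin_def
proof -
  assume "\<exists>c. \<forall>n. a n = (\<Sum>s\<in>S. c s * s n)" "\<exists>c. \<forall>n. b n = (\<Sum>s\<in>S. c s * s n)"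
  then obtain c1 c2 where c: "\<forall>n. a n = (\<Sum>s\<in>S. c1 s * s n)" "\<forall>n. b n = (\<Sum>s\<in>S. c2 s * s n)" by blast
  show "\<exists>c. \<forall>n. a n + b n = (\<Sum>s\<in>S. c s * s n)"
    by (rule exI[of _ "\<lambda>s. c1 s + c2 s"]) (simp add: c distrib_right sum.distrib)
qed

lemma lin_smult: "lin S a \<Longrightarrow> lin S (\<lambda>n. k * a n)"
  unfolding lin_def
proof -
  assume "\<exists>c. \<forall>n. a n = (\<Sum>s\<in>S. c s * s n)"
  then obtain c1 where c: "\<forall>n. a n = (\<Sum>s\<in>S. c1 s * s n)" by blast
  show "\<exists>c. \<forall>n. k * a n = (\<Sum>s\<in>S. c s * s n)"
    by (rule exI[of _ "\<lambda>s. k * c1 s"]) (simp add: c sum_distrib_left mult.assoc)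
qed

definition I :: "int \<Rightarrow> nat \<Rightarrow> int" where "I v n = (if g n = v then 1 else 0)"

theorem corollary17:
  shows "k_regular 4 PPL_t"
proof -
  define S where "S = {f, I (-1), I 0, I 1}"
  have fin: "finite S" by (simp add: S_def)
  have "lin S (\<lambda>n. PPL_t (4^i*n+b))" if b: "b < 4^i" for i b
  proof -
    obtain \<psi> \<chi> where K: "\<forall>n. f (4^i*n+b) = f n + \<psi> (g n) \<and> g (4^i*n+b) = \<chi> (g n)"
      using kernel[OF b] by blast
    have eq: "(\<lambda>n. PPL_t (4^i*n+b)) = (\<lambda>n. f n + (\<psi> (-1) * I (-1) n + (\<psi> 0 * I 0 n + \<psi> 1 * I 1 n)))"
    proof
      fix n
      show "PPL_t (4^i*n+b) = f n + (\<psi> (-1) * I (-1) n + (\<psi> 0 * I 0 n + \<psi> 1 * I 1 n))"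
        using K g_vals[of n] unfolding d_eq_f I_def by auto
    qed
    have m: "lin S f" "lin S (I (-1))" "lin S (I 0)" "lin S (I 1)"
      using fin by (auto intro: lin_mem simp: S_def)
    show ?thesis unfolding eq
      by (intro lin_add lin_smult m)
  qed
  then show ?thesis unfolding k_regular_def lin_def using fin by blast
qed

end
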